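(* Let $\varphi:S^1\to S^1$ be a minimal orientation preserving circle homeomorphism with irrational rotation number $\varrho$, and fix $\varepsilon>0$. Then there exists a neighbourhood $U$ of $\varphi$ in $C^0(S^1)$ such that for every minimal orientation preserving circle homeomorphism $\tilde\varphi\in U$ with $\varrho(\tilde\varphi)=\varrho$ we have $$\sup_{x_0\in\mathbb{R}}\sup_{n\in\mathbb{N}}|r_n(x_0)-\tilde r_n(x_0)|<\varepsilon,$$ where $r_n(x_0)=\frac12|\mathrm{cosec}(\pi(\Phi^n(x_0)-\Phi^{n-1}(x_0)))|$ and $\tilde r_n(x_0)=\frac12|\mathrm{cosec}(\pi(\tilde\Phi^n(x_0)-\tilde\Phi^{n-1}(x_0)))|$ are the local discrete radii of curvature of the curlicues generated at $x_0$ by lifts $\Phi$ of $\varphi$ and $\tilde\Phi$ of $\tilde\varphi$, respectively.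
   Context: Identify $S^1=\mathbb{R}/\mathbb{Z}$ via $x\mapsto\exp(2\pi\imath x)$; a lift is $\Phi$ with $\Phi(x+1)=\Phi(x)+1$ projecting to the homeomorphism. The curlicue generated at $x_0$ has vertices $z_0=0$, $z_n=\sum_{k=0}^{n-1}\exp(2\pi\imath\Phi^k(x_0))$; its local discrete radius of curvature $r_n$ is the radius of the circle through $z_{n-1},z_n,z_{n+1}$, which equals the formula above and does not depend on the choice of lift. $C^0(S^1)$ carries the uniform topology. *)

theory Defs
  imports "HOL-Analysis.Analysis"
begin

text \<open>We identify S^1 with R/Z. An orientation preserving circle homeomorphism is
represented by a lift: a continuous strictly increasing map Phi : R -> R with
Phi (x + 1) = Phi x + 1 (every such map projects to an orientation preserving
homeomorphism of S^1, and every such homeomorphism has such lifts).\<close>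

definition circle_lift :: "(real \<Rightarrow> real) \<Rightarrow> bool" where
  "circle_lift \<Phi> \<longleftrightarrow> continuous_on UNIV \<Phi> \<and> strict_mono \<Phi> \<and> (\<forall>x. \<Phi> (x + 1) = \<Phi> x + 1)"

text \<open>Minimality: S^1 has no nonempty proper closed invariant subset. Closed subsets
of S^1 = R/Z correspond to closed 1-periodic subsets of R.\<close>

definition circle_minimal :: "(real \<Rightarrow> real) \<Rightarrow> bool" where
  "circle_minimal \<Phi> \<longleftrightarrow>
     (\<forall>A. closed A \<and> (\<forall>x. x \<in> A \<longleftrightarrow> x + 1 \<in> A) \<and> \<Phi> ` A = A \<longrightarrow> A = {} \<or> A = UNIV)"

text \<open>Rotation number of the lift (a real number; the rotation number of the circle
map is its class mod Z).\<close>

definition rot_num :: "(real \<Rightarrow> real) \<Rightarrow> real" where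
  "rot_num \<Phi> = lim (\<lambda>n. (\<Phi> ^^ n) 0 / real n)"

definition circ_dist :: "real \<Rightarrow> real \<Rightarrow> real" where
  "circ_dist a b = \<bar>(a - b) - of_int (round (a - b))\<bar>"

definition curv_radius :: "(real \<Rightarrow> real) \<Rightarrow> real \<Rightarrow> nat \<Rightarrow> real" where
  "curv_radius \<Phi> x0 n = 1/2 * \<bar>1 / sin (pi * ((\<Phi> ^^ n) x0 - (\<Phi> ^^ (n - 1)) x0))\<bar>"

end

theory Submission
  imports Defs
begin


lemma lift_cont: "circle_lift F \<Longrightarrow> isCont F x"
  unfolding circle_lift_def by (simp add: continuous_on_eq_continuous_at)

lemma lift_mono: "circle_lift F \<Longrightarrow> strict_mono F"
  unfolding circle_lift_def by simp

lemma lift_le: "circle_lift F \<Longrightarrow> x \<le> y \<Longrightarrow> F x \<le> F y"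
  using lift_mono strict_mono_leD by blast

lemma lift_less: "circle_lift F \<Longrightarrow> x < y \<Longrightarrow> F x < F y"
  using lift_mono strict_monoD by blast

lemma lift_less_iff: "circle_lift F \<Longrightarrow> F x < F y \<longleftrightarrow> x < y"
  using lift_mono strict_mono_less by blast

lemma lift_le_iff: "circle_lift F \<Longrightarrow> F x \<le> F y \<longleftrightarrow> x \<le> y"
  using lift_mono strict_mono_less_eq by blast

lemma lift_shift_nat: "circle_lift F \<Longrightarrow> F (x + real n) = F x + real n"
proof (induction n arbitrary: x)
  case 0 then show ?case by simp
next
  case (Suc n)
  have "F (x + real (Suc n)) = F ((x + real n) + 1)" by (simp add: algebra_simps)
  also have "\<dots> = F (x + real n) + 1" using Suc.prems unfolding circle_lift_def by blast
  finally show ?case using Suc by simp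
qed

lemma lift_shift_int: "circle_lift F \<Longrightarrow> F (x + of_int k) = F x + of_int k"
proof (cases "k \<ge> 0")
  case True
  assume F: "circle_lift F"
  then show ?thesis using lift_shift_nat[OF F, of x "nat k"] True by simp
next
  case False
  assume F: "circle_lift F"
  have "F (x + of_int k) + real (nat (-k)) = F (x + of_int k + real (nat (-k)))"
    using lift_shift_nat[OF F] by simp
  also have "\<dots> = F x" using False by simp
  finally show ?thesis using False by simp
qed

lemma lift_shift_int': "circle_lift F \<Longrightarrow> F (x - of_int k) = F x - of_int k"
  using lift_shift_int[of F x "-k"] by simp

lemma lift_comp: "circle_lift F \<Longrightarrow> circle_lift G \<Longrightarrow> circle_lift (F \<circ> G)"
  unfolding circle_lift_def
  by (auto intro: continuous_on_compose2 strict_mono_o)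

lemma lift_id: "circle_lift id"
  unfolding circle_lift_def by (auto simp: strict_mono_def)

lemma lift_iter: "circle_lift F \<Longrightarrow> circle_lift (F ^^ n)"
proof (induction n)
  case 0 then show ?case using lift_id by (simp add: id_def)
next
  case (Suc n) then show ?case using lift_comp[of F "F^^n"] by (simp add: o_def)
qed

lemma lift_disp: assumes F: "circle_lift F"
  shows "\<bar>(F x - x) - (F y - y)\<bar> < 1"
proof -
  define k where "k = \<lfloor>x - y\<rfloor>"
  define x' where "x' = x - of_int k"
  have x1: "y \<le> x'" "x' < y + 1" unfolding x'_def k_def
    by (simp_all add: algebra_simps) (use floor_correct[of "x-y"] in linarith)+
  have "F x' = F x - of_int k" unfolding x'_def using lift_shift_int'[OF F] by simp
  then have e: "F x - x = F x' - x'" unfolding x'_def by simp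
  have "F y \<le> F x'" using lift_le[OF F x1(1)] .
  moreover have "F x' < F (y + 1)" using lift_less[OF F x1(2)] .
  moreover have "F (y+1) = F y + 1" using F unfolding circle_lift_def by blast
  ultimately show ?thesis using e x1 by auto
qed

lemma lift_surj: assumes F: "circle_lift F" shows "\<exists>x. F x = y"
proof -
  define k where "k = \<lfloor>y - F 0\<rfloor>"
  have "F (of_int k) = F 0 + of_int k" using lift_shift_int[OF F, of 0 k] by simp
  moreover have "F (of_int k + 1) = F 0 + of_int k + 1"
  proof -
    have "F (0 + 1) = F 0 + 1" using F unfolding circle_lift_def by blast
    then show ?thesis using lift_shift_int[OF F, of 1 k] by (simp add: add.commute)
  qed
  ultimately have "F (of_int k) \<le> y" "y \<le> F (of_int k + 1)" unfolding k_def by linarith+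
  then show ?thesis using IVT[of F "of_int k" y "of_int k + 1"] lift_cont[OF F] by auto
qed



lemma iter_sub: assumes F: "circle_lift F"
  shows "\<bar>(F^^(n*k)) 0 - real k * (F^^n) 0\<bar> \<le> real k"
proof (induction k)
  case 0 then show ?case by simp
next
  case (Suc k)
  have G: "circle_lift (F^^n)" using lift_iter[OF F] .
  have e: "(F^^(n * Suc k)) 0 = (F^^n) ((F^^(n*k)) 0)"
    by (simp only: mult_Suc_right funpow_add o_apply)
  have "\<bar>((F^^n) ((F^^(n*k)) 0) - (F^^(n*k)) 0) - ((F^^n) 0 - 0)\<bar> < 1"
    using lift_disp[OF G] by blast
  then show ?case using Suc e by (simp add: algebra_simps)
qed

lemma iter_sub2: assumes F: "circle_lift F" and n: "n \<ge> 1" and m: "m \<ge> 1"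
  shows "\<bar>(F^^(n*m)) 0 / real (n*m) - (F^^n) 0 / real n\<bar> \<le> 1 / real n"
proof -
  have h: "\<bar>(F^^(n*m)) 0 - real m * (F^^n) 0\<bar> \<le> real m" using iter_sub[OF F] .
  have nm: "real (n*m) > 0" using n m by simp
  have "(F^^(n*m)) 0 / real (n*m) - (F^^n) 0 / real n = ((F^^(n*m)) 0 - real m * (F^^n) 0) / real (n*m)"
    using n m by (simp add: diff_divide_distrib)
  also have "\<bar>\<dots>\<bar> = \<bar>(F^^(n*m)) 0 - real m * (F^^n) 0\<bar> / real (n*m)"
    using nm by (simp add: abs_divide)
  also have "\<dots> \<le> real m / real (n*m)"
    using h nm by (intro divide_right_mono) auto
  also have "\<dots> = 1 / real n" using m by simp
  finally show ?thesis .
qed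

definition rotp :: "(real \<Rightarrow> real) \<Rightarrow> real \<Rightarrow> bool" where
  "rotp F \<rho> \<longleftrightarrow> (\<forall>n\<ge>1. \<bar>(F^^n) 0 / real n - \<rho>\<bar> \<le> 1 / real n)"

lemma rot_num_rotp: assumes F: "circle_lift F" shows "rotp F (rot_num F)"
proof -
  define X where "X = (\<lambda>n. (F^^n) 0 / real n)"
  have cau: "\<bar>X n - X m\<bar> \<le> 1/real n + 1/real m" if "n \<ge> 1" "m \<ge> 1" for n m
  proof -
    have "\<bar>X (n*m) - X n\<bar> \<le> 1/real n" using iter_sub2[OF F that] unfolding X_def .
    moreover have "\<bar>X (m*n) - X m\<bar> \<le> 1/real m" using iter_sub2[OF F that(2,1)] unfolding X_def .
    ultimately show ?thesis by (simp add: mult.commute)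
  qed
  have "Cauchy X"
  proof (rule CauchyI)
    fix e :: real assume e: "0 < e"
    obtain M :: nat where M: "2 / e < real M" using reals_Archimedean2 by blast
    have "2 / e > 0" using e by simp
    then have M1: "M \<ge> 1" using M by (cases M) auto
    have "norm (X m - X n) < e" if "m \<ge> M" "n \<ge> M" for m n
    proof -
      have "1/real m \<le> 1/real M" "1/real n \<le> 1/real M" using that M1 by (auto simp: frac_le)
      moreover have "2 / real M < e" using M e M1 by (simp add: divide_less_eq mult.commute)
      ultimately show ?thesis using cau[of m n] that M1 by simp
    qed
    then show "\<exists>M. \<forall>m\<ge>M. \<forall>n\<ge>M. norm (X m - X n) < e" by blast
  qed
  then have conv: "X \<longlonglongrightarrow> rot_num F"
    unfolding rot_num_def X_def[symmetric] using Cauchy_convergent convergent_LIMSEQ_iff by blast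
  show ?thesis unfolding rotp_def
  proof (intro allI impI)
    fix n :: nat assume n: "n \<ge> 1"
    have l1: "(\<lambda>m. \<bar>X m - X n\<bar>) \<longlonglongrightarrow> \<bar>rot_num F - X n\<bar>"
      by (intro tendsto_intros conv)
    have l2: "(\<lambda>m. 1/real n + 1/real m) \<longlonglongrightarrow> 1/real n + 0"
      by (intro tendsto_intros lim_1_over_n)
    have ev: "\<forall>\<^sub>F m in sequentially. \<bar>X m - X n\<bar> \<le> 1/real n + 1/real m"
      using eventually_ge_at_top[of 1] by eventually_elim (use cau[of _ n] n in \<open>simp add: add.commute\<close>)
    have "\<bar>rot_num F - X n\<bar> \<le> 1/real n + 0" using tendsto_le[OF _ l2 l1 ev] by simp
    then show "\<bar>(F^^n) 0 / real n - rot_num F\<bar> \<le> 1 / real n" unfolding X_def by (simp add: abs_minus_commute)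
  qed
qed

lemma arch_bound: fixes x c D :: real
  assumes "\<And>k::nat. k \<ge> 1 \<Longrightarrow> x \<ge> c - D / real k" shows "x \<ge> c"
proof (rule ccontr)
  assume "\<not> x \<ge> c"
  then have d: "c - x > 0" by simp
  obtain k :: nat where k: "\<bar>D\<bar> / (c - x) < real k" using reals_Archimedean2 by blast
  have "\<bar>D\<bar> / (c - x) \<ge> 0" using d by simp
  then have k1: "k \<ge> 1" using k by (cases k) auto
  have "\<bar>D\<bar> < real k * (c - x)" using k d by (simp add: divide_less_eq mult.commute)
  then have "D / real k < c - x" using k1 by (simp add: divide_less_eq mult.commute)
  then show False using assms[OF k1] by linarith
qed

lemma rot_ge: assumes R: "rotp F \<rho>" and q: "q \<ge> 1"
  and H: "\<And>k. k \<ge> 1 \<Longrightarrow> (F^^(q*k)) 0 \<ge> real k * p - C"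
  shows "\<rho> \<ge> p / real q"
proof (rule arch_bound[where D = "\<bar>C\<bar> + 1"])
  fix k :: nat assume k: "k \<ge> 1"
  have qk: "q * k \<ge> 1" using q k by simp
  have r: "\<bar>(F^^(q*k)) 0 / real (q*k) - \<rho>\<bar> \<le> 1 / real (q*k)" using R qk unfolding rotp_def by blast
  have "(real k * p - C) / real (q*k) \<le> (F^^(q*k)) 0 / real (q*k)"
    using H[OF k] qk by (simp add: divide_right_mono)
  moreover have "(real k * p - C) / real (q*k) = p / real q - C / real (q*k)" using q k by (simp add: field_simps)
  moreover have "C / real (q*k) \<le> \<bar>C\<bar> / real k" 
  proof -
    have "C / real (q*k) \<le> \<bar>C\<bar> / real (q*k)" using qk by (simp add: divide_right_mono)
    also have "\<dots> \<le> \<bar>C\<bar> / real k" using q k by (simp add: frac_le)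
    finally show ?thesis .
  qed
  moreover have "1 / real (q*k) \<le> 1 / real k" using q k by (simp add: frac_le)
  moreover have "(\<bar>C\<bar> + 1) / real k = \<bar>C\<bar> / real k + 1 / real k" by (simp add: add_divide_distrib)
  moreover have "(F^^(q*k)) 0 / real (q*k) - \<rho> \<le> 1 / real (q*k)" using r by linarith
  ultimately show "\<rho> \<ge> p / real q - (\<bar>C\<bar> + 1) / real k" by linarith
qed

lemma rot_le: assumes R: "rotp F \<rho>" and q: "q \<ge> 1"
  and H: "\<And>k. k \<ge> 1 \<Longrightarrow> (F^^(q*k)) 0 \<le> real k * p + C"
  shows "\<rho> \<le> p / real q"
proof -
  have "-\<rho> \<ge> - p / real q"
  proof (rule arch_bound[where D = "\<bar>C\<bar> + 1"])
    fix k :: nat assume k: "k \<ge> 1"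
    have qk: "q * k \<ge> 1" using q k by simp
    have r: "\<bar>(F^^(q*k)) 0 / real (q*k) - \<rho>\<bar> \<le> 1 / real (q*k)" using R qk unfolding rotp_def by blast
    have "(real k * p + C) / real (q*k) \<ge> (F^^(q*k)) 0 / real (q*k)"
      using H[OF k] qk by (simp add: divide_right_mono)
    moreover have "(real k * p + C) / real (q*k) = p / real q + C / real (q*k)" using q k by (simp add: field_simps)
    moreover have "C / real (q*k) \<le> \<bar>C\<bar> / real k" 
    proof -
      have "C / real (q*k) \<le> \<bar>C\<bar> / real (q*k)" using qk by (simp add: divide_right_mono)
      also have "\<dots> \<le> \<bar>C\<bar> / real k" using q k by (simp add: frac_le)
      finally show ?thesis .
    qed
    moreover have "1 / real (q*k) \<le> 1 / real k" using q k by (simp add: frac_le)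
    moreover have "(\<bar>C\<bar> + 1) / real k = \<bar>C\<bar> / real k + 1 / real k" by (simp add: add_divide_distrib)
    moreover have "\<rho> - (F^^(q*k)) 0 / real (q*k) \<le> 1 / real (q*k)" using r by linarith
    ultimately show "-\<rho> \<ge> - p / real q - (\<bar>C\<bar> + 1) / real k" by linarith
  qed
  then show ?thesis by simp
qed



lemma iter_lower: assumes "\<And>y. G y \<ge> y + c" shows "(G^^k) y \<ge> y + real k * c"
proof (induction k)
  case 0 then show ?case by simp
next
  case (Suc k)
  have "G ((G^^k) y) \<ge> (G^^k) y + c" using assms .
  then show ?case using Suc by (simp add: algebra_simps)
qed

lemma iter_upper: assumes "\<And>y. G y \<le> y + c" shows "(G^^k) y \<le> y + real k * c"
proof (induction k)
  case 0 then show ?case by simp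
next
  case (Suc k)
  have "G ((G^^k) y) \<le> (G^^k) y + c" using assms .
  then show ?case using Suc by (simp add: algebra_simps)
qed

lemma iter_fix: assumes G: "circle_lift G" and h: "G y0 = y0 + of_int p"
  shows "(G^^k) y0 = y0 + of_int (int k * p)"
proof (induction k)
  case 0 then show ?case by simp
next
  case (Suc k)
  have "(G^^Suc k) y0 = G (y0 + of_int (int k * p))" using Suc by simp
  also have "\<dots> = G y0 + of_int (int k * p)" using lift_shift_int[OF G, of y0 "int k * p"] by simp
  also have "\<dots> = y0 + of_int (int (Suc k) * p)" using h by (simp add: algebra_simps)
  finally show ?case .
qed

lemma orbit_sign:
  assumes F: "circle_lift F" and R: "rotp F \<rho>" and irr: "\<rho> \<notin> \<rat>" and q: "q \<ge> 1"
  shows "(F^^q) y \<noteq> y + of_int p \<and> ((F^^q) y > y + of_int p \<longleftrightarrow> real q * \<rho> > of_int p)"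
proof -
  define G where "G = F^^q"
  have G: "circle_lift G" unfolding G_def using lift_iter[OF F] .
  have Gk: "(G^^k) = F^^(q*k)" for k unfolding G_def by (simp add: funpow_mult)
  have qpos: "real q > 0" using q by simp
  have ne: "\<rho> \<noteq> of_int p / real q"
  proof
    assume "\<rho> = of_int p / real q"
    moreover have "of_int p / real q \<in> \<rat>" by (intro Rats_divide) auto
    ultimately show False using irr by simp
  qed
  have nofix: "G y0 \<noteq> y0 + of_int p" for y0
  proof
    assume h: "G y0 = y0 + of_int p"
    define j where "j = \<lfloor>y0\<rfloor>"
    have j: "of_int j \<le> y0" "y0 < of_int j + 1" unfolding j_def by linarith+
    have b: "(G^^k) 0 \<le> real k * of_int p + 1 \<and> (G^^k) 0 \<ge> real k * of_int p - 1" for k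
    proof -
      have Gk': "circle_lift (G^^k)" using lift_iter[OF G] .
      have f: "(G^^k) y0 = y0 + real k * of_int p" using iter_fix[OF G h, of k] by simp
      have "(G^^k) (0 + of_int j) \<le> (G^^k) y0" using lift_le[OF Gk'] j by simp
      moreover have "(G^^k) y0 \<le> (G^^k) (1 + of_int j)" using lift_le[OF Gk'] j by simp
      moreover have "(G^^k) (0 + of_int j) = (G^^k) 0 + of_int j" using lift_shift_int[OF Gk'] .
      moreover have "(G^^k) (1 + of_int j) = (G^^k) 1 + of_int j" using lift_shift_int[OF Gk'] .
      moreover have "(G^^k) (0 + 1) = (G^^k) 0 + 1" using Gk' unfolding circle_lift_def by blast
      ultimately show ?thesis using f j by simp
    qed
    have "\<rho> \<ge> of_int p / real q"
      by (rule rot_ge[OF R q, where C = 1]) (use b Gk in auto)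
    moreover have "\<rho> \<le> of_int p / real q"
      by (rule rot_le[OF R q, where C = 1]) (use b Gk in auto)
    ultimately show False using ne by simp
  qed
  have cases: "(\<forall>y. G y > y + of_int p) \<or> (\<forall>y. G y < y + of_int p)"
  proof (rule ccontr)
    assume "\<not> ?thesis"
    then obtain y1 y2 where y1: "G y1 < y1 + of_int p" and y2: "G y2 > y2 + of_int p"
      using nofix by (meson linorder_neqE_linordered_idom)
    define h where "h = (\<lambda>y. G y - y - of_int p)"
    have hc: "isCont h x" for x unfolding h_def by (intro continuous_intros lift_cont[OF G])
    have "\<exists>x. h x = 0"
    proof (cases "y1 \<le> y2")
      case True
      then show ?thesis using IVT[where f=h and a=y1 and b=y2 and y=0] hc y1 y2 unfolding h_def by auto
    next
      case False
      then show ?thesis using IVT2[where f=h and a=y2 and b=y1 and y=0] hc y1 y2 unfolding h_def by auto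
    qed
    then obtain x where "h x = 0" by blast
    then have "G x = x + of_int p" unfolding h_def by simp
    then show False using nofix by blast
  qed
  show ?thesis
  proof (cases "\<forall>y. G y > y + of_int p")
    case True
    have "(G^^k) 0 \<ge> 0 + real k * of_int p" for k
      by (rule iter_lower) (use True in \<open>simp add: less_imp_le\<close>)
    then have "\<rho> \<ge> of_int p / real q"
      by (intro rot_ge[OF R q, where C = 0]) (use Gk in auto)
    then have "\<rho> > of_int p / real q" using ne by simp
    then have "real q * \<rho> > of_int p" using qpos by (simp add: pos_divide_less_eq mult.commute)
    then show ?thesis using True nofix unfolding G_def by auto
  next
    case False
    then have F2: "\<forall>y. G y < y + of_int p" using cases by blast
    have "(G^^k) 0 \<le> 0 + real k * of_int p" for k
      by (rule iter_upper) (use F2 in \<open>simp add: less_imp_le\<close>)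
    then have "\<rho> \<le> of_int p / real q"
      by (intro rot_le[OF R q, where C = 0]) (use Gk in auto)
    then have "\<rho> < of_int p / real q" using ne by simp
    then have "\<not> real q * \<rho> > of_int p" using qpos by (simp add: pos_less_divide_eq mult.commute)
    then show ?thesis using F2 nofix unfolding G_def by (meson not_less_iff_gr_or_eq)
  qed
qed

lemma orbit_order:
  assumes F: "circle_lift F" and R: "rotp F \<rho>" and irr: "\<rho> \<notin> \<rat>"
  shows "(F^^n) x < (F^^i) x + of_int l \<longleftrightarrow> real n * \<rho> < real i * \<rho> + of_int l"
proof (cases n i rule: linorder_cases)
  case equal then show ?thesis by simp
next
  case greater
  define q where "q = n - i"
  have q: "q \<ge> 1" "n = q + i" using greater unfolding q_def by auto
  have e: "(F^^n) x = (F^^q) ((F^^i) x)" using q by (simp add: funpow_add)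
  have rq: "real n * \<rho> - real i * \<rho> = real q * \<rho>" using q by (simp add: algebra_simps)
  have ne: "real q * \<rho> \<noteq> of_int l"
  proof
    assume "real q * \<rho> = of_int l"
    then have "\<rho> = of_int l / real q" using q by (simp add: field_simps)
    moreover have "of_int l / real q \<in> \<rat>" by (intro Rats_divide) auto
    ultimately show False using irr by simp
  qed
  show ?thesis using orbit_sign[OF F R irr q(1), of "(F^^i) x" l] e rq ne by auto
next
  case less
  define q where "q = i - n"
  have q: "q \<ge> 1" "i = q + n" using less unfolding q_def by auto
  have e: "(F^^i) x = (F^^q) ((F^^n) x)" using q by (simp add: funpow_add)
  have rq: "real i * \<rho> - real n * \<rho> = real q * \<rho>" using q by (simp add: algebra_simps)
  show ?thesis using orbit_sign[OF F R irr q(1), of "(F^^n) x" "-l"] e rq by auto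
qed



lemma lift_closed_image: assumes G: "circle_lift G" and A: "closed A"
  shows "closed (G ` A)"
proof -
  define g where "g = inv G"
  have inj: "inj G" using lift_mono[OF G] strict_mono_imp_inj_on by blast
  have gG: "g (G z) = z" for z unfolding g_def using inj by simp
  have surj: "surj G" using lift_surj[OF G] by (metis surjI)
  have cg: "isCont g y" for y
  proof -
    obtain x where x: "G x = y" using lift_surj[OF G] by blast
    have "isCont g (G x)"
      by (rule isCont_inverse_function[where d=1]) (auto simp: gG lift_cont[OF G])
    then show ?thesis using x by simp
  qed
  have "G ` A = g -` A"
  proof
    show "G ` A \<subseteq> g -` A" using gG by auto
    show "g -` A \<subseteq> G ` A"
    proof
      fix y assume "y \<in> g -` A"
      moreover obtain x where "G x = y" using lift_surj[OF G] by blast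
      ultimately show "y \<in> G ` A" using gG by force
    qed
  qed
  moreover have "closed (g -` A)" using continuous_closed_vimage[OF A] cg by blast
  ultimately show ?thesis by simp
qed

definition periodic_set :: "real set \<Rightarrow> bool" where
  "periodic_set A \<longleftrightarrow> (\<forall>x. x \<in> A \<longleftrightarrow> x + 1 \<in> A)"

lemma periodic_set_int: assumes "periodic_set A" shows "x + of_int k \<in> A \<longleftrightarrow> x \<in> A"
proof -
  have n: "x + real n \<in> A \<longleftrightarrow> x \<in> A" for x n
  proof (induction n)
    case 0 then show ?case by simp
  next
    case (Suc n)
    have "x + real (Suc n) = (x + real n) + 1" by simp
    then show ?case using assms Suc unfolding periodic_set_def by metis
  qed
  show ?thesis
  proof (cases "k \<ge> 0")
    case True then show ?thesis using n[of x "nat k"] by simp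
  next
    case False
    have "x + of_int k + real (nat (-k)) = x" using False by simp
    then show ?thesis using n[of "x + of_int k" "nat (-k)"] by simp
  qed
qed

lemma periodic_image: assumes G: "circle_lift G" and A: "periodic_set A"
  shows "periodic_set (G ` A)"
  unfolding periodic_set_def
proof
  fix y
  have G1: "G (a + 1) = G a + 1" for a using G unfolding circle_lift_def by blast
  show "y \<in> G ` A \<longleftrightarrow> y + 1 \<in> G ` A"
  proof
    assume "y \<in> G ` A"
    then obtain a where "a \<in> A" "y = G a" by blast
    then show "y + 1 \<in> G ` A" using G1 A unfolding periodic_set_def by (metis image_eqI)
  next
    assume "y + 1 \<in> G ` A"
    then obtain a where a: "a \<in> A" "y + 1 = G a" by blast
    have "G (a - 1) = G a - 1" using G1[of "a - 1"] by simp
    moreover have "a - 1 \<in> A" using a A unfolding periodic_set_def by (metis diff_add_cancel)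
    ultimately show "y \<in> G ` A" using a by (metis add_diff_cancel image_eqI)
  qed
qed

definition orb :: "(real \<Rightarrow> real) \<Rightarrow> real \<Rightarrow> real set" where
  "orb F x = {(F^^i) x + of_int l | i l. True}"

lemma orb_dense: assumes F: "circle_lift F" and M: "circle_minimal F"
  shows "closure (orb F x) = UNIV"
proof -
  define O' where "O' = orb F x"
  define A where "A = closure O'"
  have perO: "(+) 1 ` O' = O'"
  proof
    show "(+) 1 ` O' \<subseteq> O'" unfolding O'_def orb_def
      by clarsimp (metis add.commute of_int_1 of_int_add add.left_commute)
    show "O' \<subseteq> (+) 1 ` O'"
    proof
      fix y assume "y \<in> O'"
      then obtain i l where y: "y = (F^^i) x + of_int l" unfolding O'_def orb_def by blast
      have "(F^^i) x + of_int (l - 1) \<in> O'" unfolding O'_def orb_def by blast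
      moreover have "y = 1 + ((F^^i) x + of_int (l - 1))" using y by simp
      ultimately show "y \<in> (+) 1 ` O'" by blast
    qed
  qed
  have perA: "periodic_set A" unfolding periodic_set_def
  proof
    fix y
    have e: "(+) 1 ` A = A" unfolding A_def using closure_translation[of 1 O'] perO by simp
    show "y \<in> A \<longleftrightarrow> y + 1 \<in> A"
    proof
      assume "y \<in> A" then show "y + 1 \<in> A" using e by (metis add.commute image_eqI)
    next
      assume "y + 1 \<in> A"
      then have "y + 1 \<in> (+) 1 ` A" using e by simp
      then show "y \<in> A" by auto
    qed
  qed
  have clA: "closed A" unfolding A_def by simp
  have FO: "F ` O' \<subseteq> O'"
  proof
    fix z assume "z \<in> F ` O'"
    then obtain i l where z: "z = F ((F^^i) x + of_int l)" unfolding O'_def orb_def by blast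
    then have "z = (F^^Suc i) x + of_int l" using lift_shift_int[OF F] by simp
    then show "z \<in> O'" unfolding O'_def orb_def by blast
  qed
  have FA: "F ` A \<subseteq> A"
    unfolding A_def
    by (rule image_closure_subset) (use FO closure_subset F in \<open>auto simp: circle_lift_def intro: continuous_on_subset\<close>)
  define Ak where "Ak = (\<lambda>k. (F^^k) ` A)"
  have Akc: "closed (Ak k)" for k unfolding Ak_def using lift_closed_image[OF lift_iter[OF F] clA] .
  have Akp: "periodic_set (Ak k)" for k unfolding Ak_def using periodic_image[OF lift_iter[OF F] perA] .
  have Akdec: "Ak (Suc k) \<subseteq> Ak k" for k
  proof -
    have "Ak (Suc k) = (F^^k) ` (F ` A)" unfolding Ak_def by (simp only: funpow_Suc_right image_comp)
    also have "\<dots> \<subseteq> (F^^k) ` A" using FA by blast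
    finally show ?thesis unfolding Ak_def .
  qed
  have Akd: "Ak (m + d) \<subseteq> Ak m" for m d
  proof (induction d)
    case 0 then show ?case by simp
  next
    case (Suc d) then show ?case using Akdec[of "m + d"] by simp
  qed
  have Akmono: "m \<le> k \<Longrightarrow> Ak k \<subseteq> Ak m" for m k
    using Akd[of m "k - m"] by simp
  define B where "B = (\<Inter>k. Ak k)"
  have injF: "inj F" using lift_mono[OF F] strict_mono_imp_inj_on by blast
  have FB: "F ` B = B"
  proof -
    have "F ` B = (\<Inter>k. F ` Ak k)" unfolding B_def
      by (rule image_INT[where C=UNIV]) (use injF in auto)
    also have "\<dots> = (\<Inter>k. Ak (Suc k))" unfolding Ak_def by (simp add: image_comp)
    also have "\<dots> = B" unfolding B_def
    proof
      show "(\<Inter>k. Ak (Suc k)) \<subseteq> (\<Inter>k. Ak k)"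
      proof
        fix y assume y: "y \<in> (\<Inter>k. Ak (Suc k))"
        show "y \<in> (\<Inter>k. Ak k)"
        proof
          fix k show "y \<in> Ak k" using y Akdec[of k] by blast
        qed
      qed
      show "(\<Inter>k. Ak k) \<subseteq> (\<Inter>k. Ak (Suc k))" by blast
    qed
    finally show ?thesis .
  qed
  have Bc: "closed B" unfolding B_def using Akc by blast
  have Bp: "\<forall>y. y \<in> B \<longleftrightarrow> y + 1 \<in> B" unfolding B_def using Akp unfolding periodic_set_def by blast
  have Ane: "{0..1} \<inter> Ak k \<noteq> {}" for k
  proof -
    have "(F^^0) x + of_int 0 \<in> O'" unfolding O'_def orb_def by blast
    then have "x \<in> A" unfolding A_def using closure_subset by auto
    then have z: "(F^^k) x \<in> Ak k" unfolding Ak_def by blast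
    define z' where "z' = (F^^k) x + of_int (- \<lfloor>(F^^k) x\<rfloor>)"
    have "z' \<in> Ak k" using periodic_set_int[OF Akp] z unfolding z'_def by blast
    moreover have "z' \<in> {0..1}" unfolding z'_def by simp linarith
    ultimately show ?thesis by blast
  qed
  have "{0..1} \<inter> \<Inter>(range Ak) \<noteq> {}"
  proof (rule compact_imp_fip)
    show "compact {0..1::real}" by simp
    show "closed T" if "T \<in> range Ak" for T using that Akc by blast
    show "{0..1} \<inter> \<Inter>F' \<noteq> {}" if fin: "finite F'" and sub: "F' \<subseteq> range Ak" for F'
    proof -
      obtain K where K: "finite K" "F' = Ak ` K" using fin sub by (meson finite_subset_image)
      define m where "m = (if K = {} then 0 else Max K)"
      have "Ak m \<subseteq> Ak j" if "j \<in> K" for j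
      proof -
        have "K \<noteq> {}" using that by blast
        then have "m = Max K" unfolding m_def by simp
        then have "j \<le> m" using that K(1) by simp
        then show ?thesis using Akmono by blast
      qed
      then have "Ak m \<subseteq> \<Inter>F'" using K by auto
      then show ?thesis using Ane[of m] by blast
    qed
  qed
  then have "B \<noteq> {}" unfolding B_def by blast
  then have "B = UNIV" using M Bc Bp FB unfolding circle_minimal_def by blast
  moreover have "B \<subseteq> A"
  proof -
    have "Ak 0 = A" unfolding Ak_def by simp
    moreover have "B \<subseteq> Ak 0" unfolding B_def by blast
    ultimately show ?thesis by simp
  qed
  ultimately show ?thesis unfolding A_def O'_def by blast
qed



lemma finite_choice_bound:
  assumes "\<forall>j<(M::nat). \<exists>N::nat. Q j N" and mono: "\<And>j N N'. Q j N \<Longrightarrow> N \<le> N' \<Longrightarrow> Q j N'"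
  shows "\<exists>N. \<forall>j<M. Q j N"
  using assms(1)
proof (induction M)
  case 0 then show ?case by simp
next
  case (Suc M)
  then obtain N1 where N1: "\<forall>j<M. Q j N1" by auto
  obtain N2 where N2: "Q M N2" using Suc.prems by auto
  have "\<forall>j<Suc M. Q j (max N1 N2)"
  proof (intro allI impI)
    fix j assume "j < Suc M"
    then show "Q j (max N1 N2)"
      by (cases "j = M") (use N1 N2 mono[of _ N1 "max N1 N2"] mono[of _ N2 "max N1 N2"] in auto)
  qed
  then show ?case by blast
qed

lemma unif_dense:
  assumes F: "circle_lift F" and D: "\<And>x. closure (orb F x) = UNIV" and e: "e > 0"
  shows "\<exists>N. \<forall>x y. \<exists>i\<le>N. \<exists>l::int. y - e < (F^^i) x + of_int l \<and> (F^^i) x + of_int l < y"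
proof -
  obtain M :: nat where M: "3 / e < real M" using reals_Archimedean2 by blast
  have "3 / e > 0" using e by simp
  then have Mpos: "real M > 0" using M by linarith
  have Me: "3 / real M < e" using M e Mpos by (simp add: field_simps)
  define J where "J = (\<lambda>j::nat. {real j / real M <..< (real j + 1) / real M})"
  define P where "P = (\<lambda>x N. \<forall>j<M. \<exists>i\<le>N. \<exists>l::int. (F^^i) x + of_int l \<in> J j)"
  define U where "U = (\<lambda>N. {x. P x N})"
  have Pmono: "P x N \<Longrightarrow> N \<le> N' \<Longrightarrow> P x N'" for x N N' unfolding P_def by (meson order_trans)
  have Uopen: "open (U N)" for N
  proof -
    have "U N = (\<Inter>j\<in>{..<M}. \<Union>i\<in>{..N}. \<Union>l. (\<lambda>x. (F^^i) x + of_int l) -` J j)"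
      unfolding U_def P_def by (intro set_eqI) (simp add: Bex_def, simp only: Ball_def lessThan_iff)
    moreover have "open ((\<lambda>x. (F^^i) x + of_int l) -` J j)" for i l j
      by (rule continuous_open_vimage) (auto simp: J_def intro!: continuous_intros lift_cont[OF lift_iter[OF F]])
    ultimately show ?thesis by (auto intro!: open_INT open_UN)
  qed
  have cover: "{0..1} \<subseteq> (\<Union>N\<in>UNIV. U N)"
  proof
    fix x :: real assume "x \<in> {0..1}"
    have "\<forall>j<M. \<exists>N. \<exists>i\<le>N. \<exists>l::int. (F^^i) x + of_int l \<in> J j"
    proof (intro allI impI)
      fix j assume "j < M"
      have "real j / real M < (real j + 1) / real M" using Mpos by (simp add: divide_strict_right_mono)
      then have "J j \<noteq> {}" unfolding J_def by simp
      then have "J j \<inter> closure (orb F x) \<noteq> {}" using D by simp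
      then have "J j \<inter> orb F x \<noteq> {}" using open_Int_closure_eq_empty[of "J j" "orb F x"] unfolding J_def by simp
      then obtain i l where "(F^^i) x + of_int l \<in> J j" unfolding orb_def by blast
      then show "\<exists>N. \<exists>i\<le>N. \<exists>l::int. (F^^i) x + of_int l \<in> J j" by blast
    qed
    then have "\<exists>N. \<forall>j<M. \<exists>i\<le>N. \<exists>l::int. (F^^i) x + of_int l \<in> J j"
      by (rule finite_choice_bound[where Q = "\<lambda>j N. \<exists>i\<le>N. \<exists>l::int. (F^^i) x + of_int l \<in> J j"])
         (use order_trans in blast)+
    then obtain N where "P x N" unfolding P_def by blast
    then show "x \<in> (\<Union>N\<in>UNIV. U N)" unfolding U_def by blast
  qed
  obtain C' where C': "finite C'" "{0..1} \<subseteq> (\<Union>N\<in>C'. U N)"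
    by (rule compactE_image[OF compact_Icc[of 0 1], where f=U and C=UNIV]) (use Uopen cover in auto)
  define N0 where "N0 = Max C'"
  have C'ne: "C' \<noteq> {}" using C' by auto
  have P0: "P x N0" if xin: "x \<in> {0..1}" for x
  proof -
    obtain N where "N \<in> C'" "x \<in> U N" using C' xin by blast
    moreover have "N \<le> N0" unfolding N0_def using C' \<open>N \<in> C'\<close> by simp
    ultimately show ?thesis using Pmono unfolding U_def by blast
  qed
  show ?thesis
  proof (rule exI[of _ N0], intro allI)
    fix x y :: real
    define x' where "x' = x - of_int \<lfloor>x\<rfloor>"
    have x': "x' \<in> {0..1}" unfolding x'_def by simp linarith
    define t where "t = y - e"
    define j0 where "j0 = \<lfloor>t * real M\<rfloor> + 1"
    have j0a: "t < real_of_int j0 / real M" unfolding j0_def using Mpos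
      by (simp add: pos_less_divide_eq)
    have "real_of_int j0 \<le> t * real M + 1" unfolding j0_def by linarith
    then have "(real_of_int j0 + 1) / real M \<le> (t * real M + 2) / real M" using Mpos
      by (simp add: divide_right_mono)
    also have "\<dots> = t + 2 / real M" using Mpos by (simp add: field_simps)
    also have "\<dots> < y"
    proof -
      have "2 / real M \<le> 3 / real M" using Mpos by (simp add: divide_right_mono)
      then show ?thesis using Me unfolding t_def by simp
    qed
    finally have j0b: "(real_of_int j0 + 1) / real M < y" .
    define j where "j = nat (j0 mod int M)"
    define s where "s = j0 div int M"
    have jM: "j < M" unfolding j_def using Mpos by (simp add: nat_less_iff)
    have jj: "int j = j0 mod int M" unfolding j_def using Mpos by simp
    have "j0 = s * int M + int j" unfolding jj s_def by simp
    then have js: "real_of_int j0 = real_of_int s * real M + real j"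
      by (metis of_int_add of_int_mult of_int_of_nat_eq)
    obtain i l where i: "i \<le> N0" and il: "(F^^i) x' + of_int l \<in> J j" using P0[OF x'] jM unfolding P_def by blast
    have sh: "(F^^i) x' = (F^^i) x - of_int \<lfloor>x\<rfloor>" unfolding x'_def using lift_shift_int'[OF lift_iter[OF F]] by simp
    define z where "z = (F^^i) x + of_int (l + s - \<lfloor>x\<rfloor>)"
    have z: "z = ((F^^i) x' + of_int l) + of_int s" unfolding z_def sh by simp
    have "real j / real M + real_of_int s = real_of_int j0 / real M" using js Mpos by (simp add: field_simps)
    moreover have "(real j + 1) / real M + real_of_int s = (real_of_int j0 + 1) / real M" using js Mpos by (simp add: field_simps)
    ultimately have "t < z \<and> z < y" using il j0a j0b unfolding z J_def by auto
    then show "\<exists>i\<le>N0. \<exists>l::int. y - e < (F^^i) x + of_int l \<and> (F^^i) x + of_int l < y"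
      using i unfolding z_def t_def by blast
  qed
qed



lemma abs_sin_shift_nat: "\<bar>sin (x + real n * pi)\<bar> = \<bar>sin x\<bar>"
proof (induction n)
  case 0 then show ?case by simp
next
  case (Suc n)
  have e: "x + real (Suc n) * pi = (x + real n * pi) + pi" by (simp add: algebra_simps)
  show ?case by (subst e) (simp only: sin_periodic_pi abs_minus_cancel Suc.IH)
qed

lemma abs_sin_shift: "\<bar>sin (pi * (t + of_int k))\<bar> = \<bar>sin (pi * t)\<bar>"
proof (cases "k \<ge> 0")
  case True
  have "pi * (t + of_int k) = pi * t + real (nat k) * pi" using True by (simp add: algebra_simps)
  then show ?thesis using abs_sin_shift_nat by simp
next
  case False
  have "pi * t = pi * (t + of_int k) + real (nat (-k)) * pi" using False by (simp add: algebra_simps)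
  then show ?thesis using abs_sin_shift_nat[of "pi * (t + of_int k)" "nat (-k)"] by simp
qed

lemma lift_uc: assumes F: "circle_lift F" and e: "e > 0"
  shows "\<exists>d>0. \<forall>a b. \<bar>a - b\<bar> < d \<longrightarrow> \<bar>F a - F b\<bar> < e"
proof -
  have "continuous_on {-1..2} F" using F unfolding circle_lift_def by (auto intro: continuous_on_subset)
  then have "uniformly_continuous_on {-1..2} F" by (rule compact_uniformly_continuous) simp
  then obtain d where d: "d > 0" and hd: "\<forall>x\<in>{-1..2}. \<forall>x'\<in>{-1..2}. dist x' x < d \<longrightarrow> dist (F x') (F x) < e"
    unfolding uniformly_continuous_on_def using e by blast
  show ?thesis
  proof (intro exI[of _ "min d 1"] conjI allI impI)
    show "min d 1 > 0" using d by simp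
    fix a b :: real assume ab: "\<bar>a - b\<bar> < min d 1"
    define k where "k = \<lfloor>a\<rfloor>"
    define a' where "a' = a - of_int k"
    define b' where "b' = b - of_int k"
    have a': "a' \<in> {-1..2}" unfolding a'_def k_def by simp linarith
    have b': "b' \<in> {-1..2}" unfolding b'_def k_def using ab by simp linarith
    have "dist b' a' < d" using ab unfolding a'_def b'_def dist_real_def by (simp add: abs_minus_commute)
    then have "dist (F b') (F a') < e" using hd a' b' by blast
    moreover have "F a' = F a - of_int k" "F b' = F b - of_int k"
      unfolding a'_def b'_def using lift_shift_int'[OF F] by auto
    ultimately show "\<bar>F a - F b\<bar> < e" unfolding dist_real_def by (simp add: abs_minus_commute)
  qed
qed

lemma iter_close: assumes F: "circle_lift F"
  shows "e > 0 \<Longrightarrow> \<exists>\<delta>>0. \<forall>G. (\<forall>x. \<bar>G x - F x\<bar> < \<delta>) \<longrightarrow> (\<forall>i\<le>N. \<forall>x. \<bar>(G^^i) x - (F^^i) x\<bar> < e)"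
proof (induction N arbitrary: e)
  case 0 then show ?case by (intro exI[of _ 1]) auto
next
  case (Suc N)
  have e2: "e / 2 > 0" using Suc.prems by simp
  obtain d where d: "d > 0" and hd: "\<forall>a b. \<bar>a - b\<bar> < d \<longrightarrow> \<bar>F a - F b\<bar> < e / 2"
    using lift_uc[OF F e2] by blast
  have "min d e > 0" using d Suc.prems by simp
  then obtain \<delta>1 where d1: "\<delta>1 > 0" and h1: "\<forall>G. (\<forall>x. \<bar>G x - F x\<bar> < \<delta>1) \<longrightarrow> (\<forall>i\<le>N. \<forall>x. \<bar>(G^^i) x - (F^^i) x\<bar> < min d e)"
    using Suc.IH by blast
  show ?case
  proof (intro exI[of _ "min \<delta>1 (e/2)"] conjI allI impI)
    show "min \<delta>1 (e/2) > 0" using d1 e2 by simp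
    fix G i x assume G: "\<forall>x. \<bar>G x - F x\<bar> < min \<delta>1 (e/2)" and i: "i \<le> Suc N"
    have GN: "\<forall>i\<le>N. \<forall>x. \<bar>(G^^i) x - (F^^i) x\<bar> < min d e" using h1 G by auto
    show "\<bar>(G^^i) x - (F^^i) x\<bar> < e"
    proof (cases "i \<le> N")
      case True then show ?thesis using GN by fastforce
    next
      case False
      then have iS: "i = Suc N" using i by simp
      define a where "a = (G^^N) x"
      define b where "b = (F^^N) x"
      have ab: "\<bar>a - b\<bar> < d" using GN unfolding a_def b_def by fastforce
      have "\<bar>G a - F a\<bar> < e/2" using G by fastforce
      moreover have "\<bar>F a - F b\<bar> < e/2" using hd ab by blast
      ultimately have "\<bar>G a - F b\<bar> < e" by linarith
      then show ?thesis unfolding iS a_def b_def by simp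
    qed
  qed
qed

lemma orbit_close:
  assumes F: "circle_lift F" and RF: "rotp F \<rho>" and G: "circle_lift G" and RG: "rotp G \<rho>"
    and irr: "\<rho> \<notin> \<rat>"
    and dens: "\<forall>x y. \<exists>i\<le>N. \<exists>l::int. y - e < (F^^i) x + of_int l \<and> (F^^i) x + of_int l < y"
    and cl: "\<forall>i\<le>N. \<forall>x. \<bar>(G^^i) x - (F^^i) x\<bar> < e"
  shows "\<bar>(G^^n) x - (F^^n) x\<bar> < 2 * e"
proof -
  obtain i l where i: "i \<le> N" and il: "(F^^n) x - e < (F^^i) x + of_int l" "(F^^i) x + of_int l < (F^^n) x"
    using dens by blast
  have "\<not> real n * \<rho> < real i * \<rho> + of_int l" using orbit_order[OF F RF irr, of n x i l] il(2) by simp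
  then have "\<not> (G^^n) x < (G^^i) x + of_int l" using orbit_order[OF G RG irr, of n x i l] by simp
  moreover have "\<bar>(G^^i) x - (F^^i) x\<bar> < e" using cl i by blast
  ultimately have lo: "(G^^n) x > (F^^n) x - 2 * e" using il by linarith
  obtain j l' where j: "j \<le> N" and jl: "(F^^n) x + e - e < (F^^j) x + of_int l'" "(F^^j) x + of_int l' < (F^^n) x + e"
    using dens by blast
  have "real n * \<rho> < real j * \<rho> + of_int l'" using orbit_order[OF F RF irr, of n x j l'] jl(1) by simp
  then have "(G^^n) x < (G^^j) x + of_int l'" using orbit_order[OF G RG irr, of n x j l'] by simp
  moreover have "\<bar>(G^^j) x - (F^^j) x\<bar> < e" using cl j by blast
  ultimately have hi: "(G^^n) x < (F^^n) x + 2 * e" using jl by linarith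
  show ?thesis using lo hi by linarith
qed

lemma round_const:
  fixes g :: "real \<Rightarrow> real"
  assumes c: "\<And>x. isCont g x" and h: "\<And>x. \<bar>g x - of_int (round (g x))\<bar> < 1/2"
  shows "round (g x) = round (g (y::real))"
proof -
  have nl: "\<not> round (g a) < round (g b)" for a b
  proof
    assume lt: "round (g a) < round (g b)"
    define c0 where "c0 = real_of_int (round (g a)) + 1/2"
    have ga: "g a < c0" using h[of a] unfolding c0_def by linarith
    have "real_of_int (round (g b)) \<ge> real_of_int (round (g a)) + 1" using lt by linarith
    then have gb: "g b > c0" using h[of b] unfolding c0_def by linarith
    have "\<exists>z. g z = c0"
    proof (cases "a \<le> b")
      case True then show ?thesis using IVT[where f=g and a=a and b=b and y=c0] c ga gb by auto
    next
      case False then show ?thesis using IVT2[where f=g and a=b and b=a and y=c0] c ga gb by auto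
    qed
    then obtain z where z: "g z = c0" by blast
    have "round c0 = round (g a) + 1" unfolding c0_def round_def by simp
    then show False using h[of z] z unfolding c0_def by simp
  qed
  show ?thesis using nl[of x y] nl[of y x] by simp
qed



theorem proposition5p7:
  fixes \<Phi> :: "real \<Rightarrow> real" and \<epsilon> :: real
  assumes "circle_lift \<Phi>" and "circle_minimal \<Phi>"
    and "rot_num \<Phi> \<notin> \<rat>"
    and "\<epsilon> > 0"
  shows "\<exists>\<delta>>0. \<forall>\<Psi>. circle_lift \<Psi> \<and> circle_minimal \<Psi>
           \<and> (\<forall>x. circ_dist (\<Psi> x) (\<Phi> x) < \<delta>)
           \<and> rot_num \<Psi> - rot_num \<Phi> \<in> \<int>
         \<longrightarrow> (\<exists>c<\<epsilon>. \<forall>x0. \<forall>n\<ge>1. \<bar>curv_radius \<Phi> x0 n - curv_radius \<Psi> x0 n\<bar> \<le> c)"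
proof -
  have F: "circle_lift \<Phi>" and Mn: "circle_minimal \<Phi>" and eps: "\<epsilon> > 0" using assms by auto
  define \<rho> where "\<rho> = rot_num \<Phi>"
  have RF: "rotp \<Phi> \<rho>" unfolding \<rho>_def using rot_num_rotp[OF F] .
  have irr: "\<rho> \<notin> \<rat>" unfolding \<rho>_def using assms(3) .
  define p where "p = \<lfloor>\<rho>\<rfloor>"
  have "\<rho> \<noteq> of_int p" using irr by (metis Rats_of_int)
  moreover have "of_int p \<le> \<rho>" "\<rho> < of_int p + 1" unfolding p_def by linarith+
  ultimately have \<rho>p: "of_int p < \<rho>" "\<rho> < of_int p + 1" by auto
  have Dlo: "\<Phi> y > y + of_int p" for y
    using orbit_sign[OF F RF irr, of 1 y p] \<rho>p by simp
  have Dhi: "\<Phi> y < y + of_int p + 1" for y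
  proof -
    have "(\<Phi>^^1) y \<noteq> y + of_int (p + 1) \<and> ((\<Phi>^^1) y > y + of_int (p + 1) \<longleftrightarrow> real 1 * \<rho> > of_int (p + 1))"
      using orbit_sign[OF F RF irr, of 1 y "p + 1"] by simp
    then show ?thesis using \<rho>p by auto
  qed
  define D where "D = (\<lambda>y. \<Phi> y - y)"
  have Dper: "D (y - of_int j) = D y" for y j unfolding D_def using lift_shift_int'[OF F] by simp
  have Dcont: "continuous_on {0..1} D" unfolding D_def using F unfolding circle_lift_def
    by (auto intro!: continuous_intros intro: continuous_on_subset)
  obtain ymin where ymin: "ymin \<in> {0..1}" "\<forall>y\<in>{0..1}. D ymin \<le> D y"
    using continuous_attains_inf[OF compact_Icc _ Dcont] by auto
  obtain ymax where ymax: "ymax \<in> {0..1}" "\<forall>y\<in>{0..1}. D y \<le> D ymax"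
    using continuous_attains_sup[OF compact_Icc _ Dcont] by auto
  have Dall: "D ymin \<le> D y \<and> D y \<le> D ymax" for y
  proof -
    have "y - of_int \<lfloor>y\<rfloor> \<in> {0..1}" by simp linarith
    then show ?thesis using ymin ymax Dper[of y "\<lfloor>y\<rfloor>"] by metis
  qed
  define \<eta>0 where "\<eta>0 = min (D ymin - of_int p) (of_int p + 1 - D ymax)"
  have \<eta>0: "\<eta>0 > 0" unfolding \<eta>0_def D_def using Dlo[of ymin] Dhi[of ymax] by simp
  have h\<eta>: "of_int p + \<eta>0 \<le> D y \<and> D y \<le> of_int p + 1 - \<eta>0" for y
    using Dall[of y] unfolding \<eta>0_def by linarith
  define f where "f = (\<lambda>t::real. 1/2 * \<bar>1 / sin (pi * t)\<bar>)"
  define K where "K = {of_int p + \<eta>0/2 .. of_int p + 1 - \<eta>0/2}"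
  have sinK: "sin (pi * t) \<noteq> 0" if tK: "t \<in> K" for t
  proof
    assume "sin (pi * t) = 0"
    then obtain i :: int where "pi * t = of_int i * pi" using sin_zero_iff_int2 by blast
    then have ti: "t = of_int i" by simp
    have "of_int p < t" "t < of_int p + 1" using tK \<eta>0 unfolding K_def by auto
    then have "real_of_int p < real_of_int i" "real_of_int i < real_of_int (p + 1)" unfolding ti by simp_all
    then have "p < i" "i < p + 1" by (simp_all only: of_int_less_iff)
    then show False by linarith
  qed
  have fcont: "continuous_on K f" unfolding f_def
    by (intro continuous_intros) (use sinK in auto)
  have "uniformly_continuous_on K f" using fcont by (rule compact_uniformly_continuous) (simp add: K_def)
  moreover have "\<epsilon>/2 > 0" using eps by simp
  ultimately obtain \<gamma> where \<gamma>: "\<gamma> > 0" and h\<gamma>: "\<forall>x\<in>K. \<forall>x'\<in>K. dist x' x < \<gamma> \<longrightarrow> dist (f x') (f x) < \<epsilon>/2"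
    unfolding uniformly_continuous_on_def by blast
  have "\<gamma>/2 > 0" using \<gamma> by simp
  then obtain \<beta> where \<beta>: "\<beta> > 0" and h\<beta>: "\<forall>a b. \<bar>a - b\<bar> < \<beta> \<longrightarrow> \<bar>\<Phi> a - \<Phi> b\<bar> < \<gamma>/2"
    using lift_uc[OF F] by blast
  define e' where "e' = min \<beta> (\<gamma>/4) / 2"
  have e': "e' > 0" "2 * e' \<le> \<beta>" "2 * e' \<le> \<gamma>/4" unfolding e'_def using \<beta> \<gamma> by auto
  obtain N where dens: "\<forall>x y. \<exists>i\<le>N. \<exists>l::int. y - e' < (\<Phi>^^i) x + of_int l \<and> (\<Phi>^^i) x + of_int l < y"
    using unif_dense[OF F orb_dense[OF F Mn] e'(1)] by blast
  obtain \<delta>1 where \<delta>1: "\<delta>1 > 0" and h\<delta>1: "\<forall>G. (\<forall>x. \<bar>G x - \<Phi> x\<bar> < \<delta>1) \<longrightarrow> (\<forall>i\<le>N. \<forall>x. \<bar>(G^^i) x - (\<Phi>^^i) x\<bar> < e')"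
    using iter_close[OF F e'(1), of N] by blast
  define \<delta> where "\<delta> = min \<delta>1 (min (\<eta>0/2) (min (\<gamma>/4) (1/4)))"
  have \<delta>: "\<delta> > 0" "\<delta> \<le> \<delta>1" "\<delta> \<le> \<eta>0/2" "\<delta> \<le> \<gamma>/4" "\<delta> \<le> 1/4" unfolding \<delta>_def using \<delta>1 \<eta>0 \<gamma> by auto
  show ?thesis
  proof (rule exI[of _ \<delta>], intro conjI allI impI)
    show "\<delta> > 0" using \<delta> by simp
    fix \<Psi> assume H: "circle_lift \<Psi> \<and> circle_minimal \<Psi> \<and> (\<forall>x. circ_dist (\<Psi> x) (\<Phi> x) < \<delta>) \<and> rot_num \<Psi> - rot_num \<Phi> \<in> \<int>"
    have G: "circle_lift \<Psi>" and cd: "\<And>x. circ_dist (\<Psi> x) (\<Phi> x) < \<delta>" and rint: "rot_num \<Psi> - \<rho> \<in> \<int>"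
      using H unfolding \<rho>_def by auto
    define g where "g = (\<lambda>x. \<Psi> x - \<Phi> x)"
    have gc: "isCont g x" for x unfolding g_def using lift_cont[OF G] lift_cont[OF F] by (intro continuous_intros)
    have gh: "\<bar>g x - of_int (round (g x))\<bar> < \<delta>" for x using cd[of x] unfolding g_def circ_dist_def by simp
    have gh2: "\<bar>g x - of_int (round (g x))\<bar> < 1/2" for x using gh[of x] \<delta> by linarith
    define k where "k = round (g 0)"
    have close: "\<bar>\<Psi> x - of_int k - \<Phi> x\<bar> < \<delta>" for x
      using gh[of x] round_const[of g, OF gc gh2, of x 0] unfolding k_def g_def by (simp add: algebra_simps)
    define \<Psi>' where "\<Psi>' = (\<lambda>x. \<Psi> x - of_int k)"
    have G': "circle_lift \<Psi>'" unfolding circle_lift_def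
    proof (intro conjI allI)
      show "continuous_on UNIV \<Psi>'" unfolding \<Psi>'_def using G unfolding circle_lift_def by (intro continuous_intros) auto
      show "strict_mono \<Psi>'" unfolding \<Psi>'_def strict_mono_def using lift_less[OF G] by auto
      fix x show "\<Psi>' (x + 1) = \<Psi>' x + 1" unfolding \<Psi>'_def using G unfolding circle_lift_def by auto
    qed
    have it: "(\<Psi>'^^n) x = (\<Psi>^^n) x - of_int (int n * k)" for n x
    proof (induction n)
      case 0 then show ?case by simp
    next
      case (Suc n)
      have "(\<Psi>'^^Suc n) x = \<Psi> ((\<Psi>^^n) x - of_int (int n * k)) - of_int k" using Suc unfolding \<Psi>'_def by simp
      also have "\<dots> = (\<Psi>^^Suc n) x - of_int (int (Suc n) * k)"
        using lift_shift_int'[OF G, of "(\<Psi>^^n) x" "int n * k"] by (simp add: algebra_simps)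
      finally show ?case .
    qed
    define \<rho>\<Psi> where "\<rho>\<Psi> = rot_num \<Psi>"
    have R\<Psi>: "rotp \<Psi> \<rho>\<Psi>" unfolding \<rho>\<Psi>_def using rot_num_rotp[OF G] .
    have R\<Psi>': "rotp \<Psi>' (\<rho>\<Psi> - of_int k)" unfolding rotp_def
    proof (intro allI impI)
      fix n :: nat assume n: "n \<ge> 1"
      have "(\<Psi>'^^n) 0 / real n - (\<rho>\<Psi> - of_int k) = (\<Psi>^^n) 0 / real n - \<rho>\<Psi>"
        using n unfolding it by (simp add: field_simps)
      moreover have "\<bar>(\<Psi>^^n) 0 / real n - \<rho>\<Psi>\<bar> \<le> 1 / real n" using R\<Psi> n unfolding rotp_def by blast
      ultimately show "\<bar>(\<Psi>'^^n) 0 / real n - (\<rho>\<Psi> - of_int k)\<bar> \<le> 1 / real n" by simp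
    qed
    obtain m where m: "\<rho>\<Psi> - \<rho> = of_int m" using rint unfolding \<rho>\<Psi>_def by (metis Ints_cases)
    define \<rho>' where "\<rho>' = \<rho>\<Psi> - of_int k"
    have \<rho>'e: "\<rho>' = \<rho> + of_int (m - k)" unfolding \<rho>'_def using m by simp
    have irr': "\<rho>' \<notin> \<rat>"
    proof
      assume "\<rho>' \<in> \<rat>"
      then have "\<rho>' - of_int (m - k) \<in> \<rat>" by (intro Rats_diff) auto
      then show False using irr \<rho>'e by simp
    qed
    have c1: "\<Psi>' y > y + of_int p" for y
      using close[of y] h\<eta>[of y] \<delta> \<eta>0 unfolding \<Psi>'_def D_def by linarith
    have c2: "\<Psi>' y < y + of_int (p + 1)" for y
      using close[of y] h\<eta>[of y] \<delta> \<eta>0 unfolding \<Psi>'_def D_def by simp linarith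
    have "\<rho>' > of_int p" using orbit_sign[OF G' R\<Psi>'[folded \<rho>'_def] irr', of 1 0 p] c1[of 0] by simp
    moreover have "\<not> \<rho>' > of_int (p + 1)" using orbit_sign[OF G' R\<Psi>'[folded \<rho>'_def] irr', of 1 0 "p + 1"] c2[of 0] by simp
    ultimately have "\<bar>of_int (m - k) :: real\<bar> < 1" using \<rho>'e \<rho>p by simp
    then have "m - k = 0" by linarith
    then have "\<rho>' = \<rho>" using \<rho>'e by simp
    then have R\<Psi>'': "rotp \<Psi>' \<rho>" using R\<Psi>' unfolding \<rho>'_def by simp
    have cl: "\<forall>i\<le>N. \<forall>x. \<bar>(\<Psi>'^^i) x - (\<Phi>^^i) x\<bar> < e'"
    proof -
      have "\<forall>x. \<bar>\<Psi>' x - \<Phi> x\<bar> < \<delta>1"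
      proof
        fix x show "\<bar>\<Psi>' x - \<Phi> x\<bar> < \<delta>1" using close[of x] \<delta>(2) unfolding \<Psi>'_def by linarith
      qed
      then show ?thesis using h\<delta>1 by blast
    qed
    have oc: "\<bar>(\<Psi>'^^n) x - (\<Phi>^^n) x\<bar> < 2 * e'" for n x
      using orbit_close[OF F RF G' R\<Psi>'' irr dens cl] .
    show "\<exists>c<\<epsilon>. \<forall>x0. \<forall>n\<ge>1. \<bar>curv_radius \<Phi> x0 n - curv_radius \<Psi> x0 n\<bar> \<le> c"
    proof (intro exI[of _ "\<epsilon>/2"] conjI allI impI)
      show "\<epsilon>/2 < \<epsilon>" using eps by simp
      fix x0 :: real and n :: nat assume n: "n \<ge> 1"
      define a where "a = (\<Phi>^^(n-1)) x0"
      define b where "b = (\<Psi>'^^(n-1)) x0"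
      have hn: "n = Suc (n - 1)" using n by simp
      have Fa: "(\<Phi>^^n) x0 = \<Phi> a" unfolding a_def by (subst hn) simp
      have Gb: "(\<Psi>'^^n) x0 = \<Psi>' b" unfolding b_def by (subst hn) simp
      define t where "t = \<Phi> a - a"
      define t' where "t' = \<Psi>' b - b"
      have ab2: "\<bar>a - b\<bar> < 2 * e'" using oc[of "n-1" x0] unfolding a_def b_def by (simp add: abs_minus_commute)
      have ab: "\<bar>a - b\<bar> < \<beta>" using oc[of "n-1" x0] e' unfolding a_def b_def by (simp add: abs_minus_commute)
      have tK: "t \<in> K" using h\<eta>[of a] \<eta>0 unfolding K_def t_def D_def by auto
      have t'D: "\<bar>t' - D b\<bar> < \<delta>" using close[of b] unfolding t'_def D_def \<Psi>'_def by simp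
      have t'K: "t' \<in> K" using t'D h\<eta>[of b] \<delta> unfolding K_def by auto
      have "\<bar>\<Phi> a - \<Phi> b\<bar> < \<gamma>/2" using h\<beta> ab by blast
      then have tt: "\<bar>t' - t\<bar> < \<gamma>" using t'D ab2 e' \<delta> unfolding t_def D_def abs_less_iff by linarith
      have "dist (f t') (f t) < \<epsilon>/2" using h\<gamma> tK t'K tt unfolding dist_real_def by blast
      moreover have "curv_radius \<Phi> x0 n = f t"
        unfolding curv_radius_def f_def t_def using Fa a_def by simp
      moreover have "curv_radius \<Psi> x0 n = f t'"
      proof -
        have "(\<Psi>^^n) x0 - (\<Psi>^^(n-1)) x0 = t' + of_int k"
        proof -
          have "(\<Psi>^^n) x0 = (\<Psi>'^^n) x0 + of_int (int n * k)" using it[of n x0] by simp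
          moreover have "(\<Psi>^^(n-1)) x0 = b + of_int (int (n-1) * k)" using it[of "n-1" x0] unfolding b_def by simp
          moreover have "of_int (int n * k) - of_int (int (n-1) * k) = (of_int k :: real)"
            using n by (simp add: of_nat_diff algebra_simps)
          ultimately show ?thesis unfolding t'_def Gb by simp
        qed
        then show ?thesis unfolding curv_radius_def f_def using abs_sin_shift[of t' k]
          by (simp add: abs_divide)
      qed
      ultimately show "\<bar>curv_radius \<Phi> x0 n - curv_radius \<Psi> x0 n\<bar> \<le> \<epsilon>/2"
        unfolding dist_real_def by (simp add: abs_minus_commute)
    qed
  qed
qed

end
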